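(* Let $\mathcal{A}=(Q,\Sigma,q_0,\Delta,F,C)$ be a PA of dimension $d$. Then there exists a PA $\mathcal{A}^{IO}$ of dimension $d+1$ such that: the initial state of $\mathcal{A}^{IO}$ is its only accepting state; $L(\mathcal{A})\setminus\{\varepsilon\}=L(\mathcal{A}^{IO})\setminus\{\varepsilon\}$; and the underlying graph of $\mathcal{A}^{IO}$ is strongly connected (its set of states forms a single strongly connected component).
   Context: A semi-linear set in $\mathbb{N}^d$ is a finite union of sets $\{b_0+\sum_{j=1}^\ell b_jz_j\mid z_j\in\mathbb{N}\}$ with $b_j\in\mathbb{N}^d$. A Parikh automaton (PA) of dimension $d$ is $(Q,\Sigma,q_0,\Delta,F,C)$ with finite $Q$, $q_0\in Q$, $F\subseteq Q$, finite $\Delta\subseteq Q\times\Sigma\times\mathbb{N}^d\times Q$, semi-linear $C\subseteq\mathbb{N}^d$. A run on $w=x_1\cdots x_n$ is $r_1\cdots r_n$ with $r_i=(p_{i-1},x_i,\mathbf{v}_i,p_i)\in\Delta$, $p_0=q_0$ (the empty run on $\varepsilon$ if $n=0$); it is accepting if $p_n\in F$ and $\sum_i\mathbf{v}_i\in C$; $L(\mathcal{A})$ is the set of finite words with an accepting run. The underlying graph has vertex set the states and an edge $(p,q)$ iff some transition goes from $p$ to $q$; a strongly connected component is a maximal set of mutually reachable vertices. *)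

theory Defs
  imports Main
begin

text \<open>Vectors of \<open>\<nat>\<^sup>d\<close> are represented as lists of naturals of length d.\<close>

definition vadd :: "nat list \<Rightarrow> nat list \<Rightarrow> nat list" where
  "vadd u v = map2 (+) u v"

definition vzero :: "nat \<Rightarrow> nat list" where
  "vzero d = replicate d 0"

definition vsmult :: "nat \<Rightarrow> nat list \<Rightarrow> nat list" where
  "vsmult k v = map ((*) k) v"

definition vsum :: "nat \<Rightarrow> nat list list \<Rightarrow> nat list" where
  "vsum d vs = foldr vadd vs (vzero d)"

definition linear_set :: "nat \<Rightarrow> nat list \<Rightarrow> nat list list \<Rightarrow> nat list set" where
  "linear_set d b0 bs =
     {vadd b0 (vsum d (map2 vsmult zs bs)) | zs. length zs = length bs}"

definition semilinear :: "nat \<Rightarrow> nat list set \<Rightarrow> bool" where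
  "semilinear d C \<longleftrightarrow> (\<exists>S. finite S \<and>
      (\<forall>(b0, bs) \<in> S. length b0 = d \<and> (\<forall>b \<in> set bs. length b = d)) \<and>
      C = (\<Union>(b0, bs) \<in> S. linear_set d b0 bs))"

type_synonym ('q, 'a) transition = "'q \<times> 'a \<times> nat list \<times> 'q"

record ('q, 'a) pa =
  states :: "'q set"
  alphabet :: "'a set"
  init :: 'q
  trans :: "('q, 'a) transition set"
  final :: "'q set"
  constr :: "nat list set"

definition src :: "('q, 'a) transition \<Rightarrow> 'q" where "src t = fst t"
definition lbl :: "('q, 'a) transition \<Rightarrow> 'a" where "lbl t = fst (snd t)"
definition vec :: "('q, 'a) transition \<Rightarrow> nat list" where "vec t = fst (snd (snd t))"
definition tgt :: "('q, 'a) transition \<Rightarrow> 'q" where "tgt t = snd (snd (snd t))"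

definition is_pa :: "nat \<Rightarrow> ('q, 'a) pa \<Rightarrow> bool" where
  "is_pa d A \<longleftrightarrow> finite (states A) \<and> finite (alphabet A) \<and>
     init A \<in> states A \<and> final A \<subseteq> states A \<and> finite (trans A) \<and>
     trans A \<subseteq> states A \<times> alphabet A \<times> {v. length v = d} \<times> states A \<and>
     semilinear d (constr A)"

fun is_run :: "('q, 'a) transition set \<Rightarrow> 'q \<Rightarrow> ('q, 'a) transition list \<Rightarrow> 'q \<Rightarrow> bool" where
  "is_run D p [] q \<longleftrightarrow> p = q"
| "is_run D p (t # ts) q \<longleftrightarrow> t \<in> D \<and> src t = p \<and> is_run D (tgt t) ts q"

definition lang :: "nat \<Rightarrow> ('q, 'a) pa \<Rightarrow> 'a list set" where
  "lang d A = {map lbl ts | ts. \<exists>q. is_run (trans A) (init A) ts q \<and> q \<in> final A \<and>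
                                   vsum d (map vec ts) \<in> constr A}"

definition graph_edges :: "('q, 'a) pa \<Rightarrow> ('q \<times> 'q) set" where
  "graph_edges A = {(src t, tgt t) | t. t \<in> trans A}"

definition strongly_connected :: "('q, 'a) pa \<Rightarrow> bool" where
  "strongly_connected A \<longleftrightarrow> (\<forall>p \<in> states A. \<forall>q \<in> states A. (p, q) \<in> (graph_edges A)\<^sup>*)"

end

theory Submission
  imports Defs
begin

definition SB :: "('q, 'a) pa \<Rightarrow> 'q option set" where
  "SB A = (if alphabet A = {} then {None} else insert None (Some ` states A))"

definition TB :: "nat \<Rightarrow> ('q, 'a) pa \<Rightarrow> ('q option, 'a) transition set" where
  "TB d A = {(p', a, v @ [c], q') | p' a v c q'. \<exists>p q. (p,a,v,q) \<in> trans A \<and>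
      (p' = Some p \<or> p' = None \<and> p = init A) \<and>
      (q' = Some q \<and> c = 0 \<or> q' = None \<and> q \<in> final A \<and> c = 1)}
    \<union> (SB A \<times> alphabet A \<times> {vzero d @ [2]} \<times> SB A)"

definition BB :: "nat \<Rightarrow> ('q, 'a) pa \<Rightarrow> ('q option, 'a) pa" where
  "BB d A = \<lparr>states = SB A, alphabet = alphabet A, init = None, trans = TB d A,
     final = {None}, constr = (\<lambda>v. v @ [1]) ` constr A\<rparr>"

lemma tr_simps[simp]: "src (p, a, v, q) = p" "lbl (p, a, v, q) = a" "vec (p, a, v, q) = v" "tgt (p, a, v, q) = q"
  by (simp_all add: src_def lbl_def vec_def tgt_def)

definition mk :: "('q, 'a) transition \<Rightarrow> nat" where "mk t = last (vec t)"

lemma mk_simp[simp]: "mk (p, a, v, q) = last v" by (simp add: mk_def)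

definition proj :: "('q, 'a) pa \<Rightarrow> 'q option \<Rightarrow> 'q" where
  "proj A s = (case s of None \<Rightarrow> init A | Some p \<Rightarrow> p)"

lemma tb_cases:
  assumes "t \<in> TB d A"
  shows "mk t = 2 \<or>
    (mk t = 0 \<and> (\<exists>q. tgt t = Some q \<and> (proj A (src t), lbl t, butlast (vec t), q) \<in> trans A)) \<or>
    (mk t = 1 \<and> tgt t = None \<and> (\<exists>q \<in> final A. (proj A (src t), lbl t, butlast (vec t), q) \<in> trans A))"
  using assms unfolding TB_def mk_def proj_def src_def tgt_def lbl_def vec_def
  by auto

lemma tb_len:
  assumes "is_pa d A" "t \<in> TB d A"
  shows "length (vec t) = Suc d"
  using assms unfolding TB_def is_pa_def vec_def vzero_def by auto

lemma run_set: "is_run D p ts q \<Longrightarrow> set ts \<subseteq> D"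
  by (induction ts arbitrary: p) auto

lemma R0: "is_run (TB d A) s ts s' \<Longrightarrow> sum_list (map mk ts) = 0 \<Longrightarrow> ts \<noteq> [] \<Longrightarrow> s' \<noteq> None"
proof (induction ts arbitrary: s)
  case Nil then show ?case by simp
next
  case (Cons t ts)
  show ?case
  proof (cases ts)
    case Nil
    then show ?thesis using Cons.prems tb_cases[of t d A] by auto
  next
    case (Cons _ _)
    then show ?thesis using Cons.prems Cons.IH by auto
  qed
qed

lemma R1: "is_run (TB d A) s ts None \<Longrightarrow> sum_list (map mk ts) = 1 \<Longrightarrow>
  \<exists>tsA q. is_run (trans A) (proj A s) tsA q \<and> q \<in> final A \<and> map lbl tsA = map lbl ts
     \<and> map vec tsA = map (butlast \<circ> vec) ts"
proof (induction ts arbitrary: s)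
  case Nil then show ?case by simp
next
  case (Cons t ts)
  have t: "t \<in> TB d A" "src t = s" and r: "is_run (TB d A) (tgt t) ts None"
    using Cons.prems by auto
  from tb_cases[OF t(1)] consider "mk t = 2"
    | "mk t = 0" "\<exists>q. tgt t = Some q \<and> (proj A (src t), lbl t, butlast (vec t), q) \<in> trans A"
    | "mk t = 1" "tgt t = None" "\<exists>q \<in> final A. (proj A (src t), lbl t, butlast (vec t), q) \<in> trans A"
    by auto
  then show ?case
  proof cases
    case 1 then show ?thesis using Cons.prems by simp
  next
    case 2
    then obtain q where q: "tgt t = Some q" "(proj A s, lbl t, butlast (vec t), q) \<in> trans A"
      using t by auto
    have "sum_list (map mk ts) = 1" using Cons.prems 2 by simp
    from Cons.IH[OF r this] obtain tsA q' where
      h: "is_run (trans A) (proj A (tgt t)) tsA q'" "q' \<in> final A" "map lbl tsA = map lbl ts"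
        "map vec tsA = map (butlast \<circ> vec) ts" by blast
    show ?thesis
      apply (rule exI[of _ "(proj A s, lbl t, butlast (vec t), q) # tsA"], rule exI[of _ q'])
      using h q t by (simp add: proj_def)
  next
    case 3
    then obtain q where q: "q \<in> final A" "(proj A s, lbl t, butlast (vec t), q) \<in> trans A"
      using t by auto
    have "sum_list (map mk ts) = 0" using Cons.prems 3 by simp
    then have "ts = []" using R0[of d A None ts None] r 3 by auto
    show ?thesis
      apply (rule exI[of _ "[(proj A s, lbl t, butlast (vec t), q)]"], rule exI[of _ q])
      using q \<open>ts = []\<close> t by simp
  qed
qed

lemma F: "is_run (trans A) p ts q \<Longrightarrow> q \<in> final A \<Longrightarrow> ts \<noteq> [] \<Longrightarrow>
  (s = Some p \<or> s = None \<and> p = init A) \<Longrightarrow>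
  \<exists>tsB. is_run (TB d A) s tsB None \<and> map lbl tsB = map lbl ts \<and>
     map (butlast \<circ> vec) tsB = map vec ts \<and> sum_list (map mk tsB) = 1"
proof (induction ts arbitrary: p s)
  case Nil then show ?case by simp
next
  case (Cons t ts)
  obtain a v q0 where tt: "t = (p, a, v, q0)" and tin: "t \<in> trans A"
    using Cons.prems by (cases t) (auto simp: src_def)
  show ?case
  proof (cases ts)
    case Nil
    then have "q0 = q" using Cons.prems tt by (simp add: tgt_def)
    have "(s, a, v @ [1], None) \<in> TB d A"
      unfolding TB_def using tin tt Cons.prems(2,4) \<open>q0 = q\<close> by blast
    then show ?thesis
      apply (intro exI[of _ "[(s, a, v @ [1], None)]"])
      using Nil tt by simp
  next
    case (Cons _ _)
    then have ne: "ts \<noteq> []" by simp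
    have r: "is_run (trans A) q0 ts q" using Cons.prems tt by (simp add: tgt_def)
    from Cons.IH[OF r Cons.prems(2) ne, of "Some q0"] obtain tsB where
      h: "is_run (TB d A) (Some q0) tsB None" "map lbl tsB = map lbl ts"
         "map (butlast \<circ> vec) tsB = map vec ts" "sum_list (map mk tsB) = 1"
      by blast
    have "(s, a, v @ [0], Some q0) \<in> TB d A"
      unfolding TB_def using tin tt Cons.prems(4) by blast
    then show ?thesis
      apply (intro exI[of _ "(s, a, v @ [0], Some q0) # tsB"])
      using h tt by (simp add: comp_def)
  qed
qed

lemma vadd_app: "length u = length v \<Longrightarrow> vadd (u @ [a]) (v @ [b]) = vadd u v @ [a + b]"
  by (simp add: vadd_def)

lemma vadd_len: "length (vadd u v) = min (length u) (length v)"
  by (simp add: vadd_def)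

lemma vsum_len: "(\<forall>v\<in>set vs. length v = d) \<Longrightarrow> length (vsum d vs) = d"
  by (induction vs) (auto simp: vsum_def vzero_def vadd_len)

lemma vsum_split: "(\<forall>v\<in>set vs. length v = Suc d) \<Longrightarrow>
  vsum (Suc d) vs = vsum d (map butlast vs) @ [sum_list (map last vs)]"
proof (induction vs)
  case Nil then show ?case by (simp add: vsum_def vzero_def replicate_append_same)
next
  case (Cons v vs)
  have v: "v = butlast v @ [last v]" using Cons.prems
    by (metis append_butlast_last_id length_0_conv list.set_intros(1) nat.distinct(1))
  have l1: "length (butlast v) = d" using Cons.prems by simp
  have l2: "length (vsum d (map butlast vs)) = d" using Cons.prems by (intro vsum_len) auto
  have "vsum (Suc d) (v # vs) = vadd v (vsum (Suc d) vs)" by (simp add: vsum_def)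
  also have "\<dots> = vadd (butlast v @ [last v]) (vsum d (map butlast vs) @ [sum_list (map last vs)])"
    using Cons.IH Cons.prems by (simp only: v[symmetric]) simp
  also have "\<dots> = vsum d (map butlast (v # vs)) @ [sum_list (map last (v # vs))]"
  proof -
    have "vadd (butlast v @ [last v]) (vsum d (map butlast vs) @ [sum_list (map last vs)])
       = vadd (butlast v) (vsum d (map butlast vs)) @ [last v + sum_list (map last vs)]"
      by (rule vadd_app) (simp only: l1 l2)
    also have "vadd (butlast v) (vsum d (map butlast vs)) = vsum d (map butlast (v # vs))"
      by (simp add: vsum_def)
    finally show ?thesis by simp
  qed
  finally show ?case .
qed


lemma vsmult_app: "vsmult k (v @ [c]) = vsmult k v @ [k * c]"
  by (simp add: vsmult_def)

lemma vsmult_len: "length (vsmult k v) = length v"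
  by (simp add: vsmult_def)

lemma vsum_shift:
  "length zs = length bs \<Longrightarrow> (\<forall>b\<in>set bs. length b = d) \<Longrightarrow>
   vsum (Suc d) (map2 vsmult zs (map (\<lambda>b. b @ [0]) bs)) = vsum d (map2 vsmult zs bs) @ [0]"
proof (induction zs bs rule: list_induct2)
  case Nil then show ?case by (simp add: vsum_def vzero_def replicate_append_same)
next
  case (Cons z zs b bs)
  have l2: "length (vsum d (map2 vsmult zs bs)) = d"
    using Cons.prems Cons.hyps by (intro vsum_len) (auto simp: vsmult_len dest: set_zip_rightD)
  have "vsum (Suc d) (map2 vsmult (z # zs) (map (\<lambda>b. b @ [0]) (b # bs)))
      = vadd (vsmult z b @ [0]) (vsum d (map2 vsmult zs bs) @ [0])"
    using Cons by (simp add: vsum_def vsmult_app)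
  also have "\<dots> = vadd (vsmult z b) (vsum d (map2 vsmult zs bs)) @ [0]"
    using Cons.prems l2 by (subst vadd_app) (auto simp: vsmult_len)
  finally show ?case by (simp add: vsum_def)
qed

lemma lin_shift:
  assumes "length b0 = d" "\<forall>b\<in>set bs. length b = d"
  shows "linear_set (Suc d) (b0 @ [1]) (map (\<lambda>b. b @ [0]) bs) = (\<lambda>v. v @ [1]) ` linear_set d b0 bs"
proof -
  have e: "vadd (b0 @ [1]) (vsum (Suc d) (map2 vsmult zs (map (\<lambda>b. b @ [0]) bs)))
      = vadd b0 (vsum d (map2 vsmult zs bs)) @ [1]" if "length zs = length bs" for zs
  proof -
    have l: "length (vsum d (map2 vsmult zs bs)) = d"
      using assms by (intro vsum_len) (auto simp: vsmult_len dest: set_zip_rightD)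
    show ?thesis using vsum_shift[OF that assms(2)] vadd_app[of b0 _ 1 0] l assms(1) by simp
  qed
  show ?thesis unfolding linear_set_def
  proof (intro set_eqI iffI)
    fix x assume "x \<in> {vadd (b0 @ [1]) (vsum (Suc d) (map2 vsmult zs (map (\<lambda>b. b @ [0]) bs))) |zs.
             length zs = length (map (\<lambda>b. b @ [0]) bs)}"
    then obtain zs where "length zs = length bs"
      "x = vadd (b0 @ [1]) (vsum (Suc d) (map2 vsmult zs (map (\<lambda>b. b @ [0]) bs)))" by auto
    then show "x \<in> (\<lambda>v. v @ [1]) ` {vadd b0 (vsum d (map2 vsmult zs bs)) |zs. length zs = length bs}"
      using e by blast
  next
    fix x assume "x \<in> (\<lambda>v. v @ [1]) ` {vadd b0 (vsum d (map2 vsmult zs bs)) |zs. length zs = length bs}"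
    then obtain zs where z: "length zs = length bs"
      "x = vadd b0 (vsum d (map2 vsmult zs bs)) @ [1]" by auto
    show "x \<in> {vadd (b0 @ [1]) (vsum (Suc d) (map2 vsmult zs (map (\<lambda>b. b @ [0]) bs))) |zs.
             length zs = length (map (\<lambda>b. b @ [0]) bs)}"
      unfolding z(2) e[OF z(1), symmetric] using z(1) by auto
  qed
qed

lemma semilinear_shift:
  assumes "semilinear d C"
  shows "semilinear (Suc d) ((\<lambda>v. v @ [1]) ` C)"
proof -
  obtain S where S: "finite S" "\<forall>(b0, bs) \<in> S. length b0 = d \<and> (\<forall>b \<in> set bs. length b = d)"
    "C = (\<Union>(b0, bs) \<in> S. linear_set d b0 bs)"
    using assms unfolding semilinear_def by blast
  have S2: "\<And>b0 bs. (b0, bs) \<in> S \<Longrightarrow> length b0 = d \<and> (\<forall>b\<in>set bs. length b = d)"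
    using S(2) by fastforce
  define S' where "S' = (\<lambda>(b0, bs). (b0 @ [1::nat], map (\<lambda>b. b @ [0::nat]) bs)) ` S"
  have "(\<lambda>v. v @ [1]) ` C = (\<Union>(b0, bs) \<in> S'. linear_set (Suc d) b0 bs)"
  proof -
    have "(\<lambda>v. v @ [1]) ` C = (\<Union>(b0, bs) \<in> S. (\<lambda>v. v @ [1]) ` linear_set d b0 bs)"
      using S(3) by auto
    also have "\<dots> = (\<Union>(b0, bs) \<in> S. linear_set (Suc d) (b0 @ [1]) (map (\<lambda>b. b @ [0]) bs))"
      using S2 lin_shift by (intro SUP_cong refl) auto
    also have "\<dots> = (\<Union>(b0, bs) \<in> S'. linear_set (Suc d) b0 bs)"
      unfolding S'_def by (simp add: image_image case_prod_beta)
    finally show ?thesis .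
  qed
  moreover have "finite S'" using S(1) unfolding S'_def by simp
  moreover have "\<forall>(b0, bs) \<in> S'. length b0 = Suc d \<and> (\<forall>b \<in> set bs. length b = Suc d)"
    using S2 unfolding S'_def by auto
  ultimately show ?thesis unfolding semilinear_def by blast
qed

theorem lemma9:
  fixes A :: "('q, 'a) pa" and d :: nat
  assumes "is_pa d A"
  shows "\<exists>B :: ('q option, 'a) pa.
           is_pa (d + 1) B \<and> alphabet B = alphabet A \<and>
           final B = {init B} \<and>
           lang d A - {[]} = lang (d + 1) B - {[]} \<and>
           strongly_connected B"
proof (intro exI[of _ "BB d A"] conjI)
  have pa: "finite (states A)" "finite (alphabet A)" "init A \<in> states A" "final A \<subseteq> states A"
    "finite (trans A)" "trans A \<subseteq> states A \<times> alphabet A \<times> {v. length v = d} \<times> states A"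
    "semilinear d (constr A)"
    using assms unfolding is_pa_def by auto
  have fSB: "finite (SB A)" using pa(1) by (simp add: SB_def)
  define W where "W = (\<lambda>(v, c). v @ [c::nat]) ` ((insert (vzero d) (vec ` trans A)) \<times> {0, 1, 2})"
  have fW: "finite W" using pa(5) unfolding W_def by simp
  have sub: "TB d A \<subseteq> SB A \<times> alphabet A \<times> (W \<inter> {v. length v = d + 1}) \<times> SB A"
  proof
    fix t assume t: "t \<in> TB d A"
    then show "t \<in> SB A \<times> alphabet A \<times> (W \<inter> {v. length v = d + 1}) \<times> SB A"
    proof (cases rule: UnE[OF t[unfolded TB_def]])
      case 1
      then obtain p' a v c q' p q where h: "t = (p', a, v @ [c], q')" "(p,a,v,q) \<in> trans A"
        "p' = Some p \<or> p' = None \<and> p = init A"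
        "q' = Some q \<and> c = 0 \<or> q' = None \<and> q \<in> final A \<and> c = 1" by blast
      have "v \<in> vec ` trans A" using h(2) by (metis tr_simps(3) imageI)
      then have "v @ [c] \<in> W" using h(4) unfolding W_def by force
      then show ?thesis using h pa(6) by (auto simp: SB_def)
    next
      case 2
      then show ?thesis unfolding W_def by (auto simp: vzero_def)
    qed
  qed
  show "is_pa (d + 1) (BB d A)"
    unfolding is_pa_def BB_def
  proof (simp only: pa.simps, intro conjI)
    show "TB d A \<subseteq> SB A \<times> alphabet A \<times> {v. length v = d + 1} \<times> SB A" using sub by auto
    show "finite (TB d A)" using finite_subset[OF sub] fSB pa(2) fW by simp
    show "semilinear (d + 1) ((\<lambda>v. v @ [1]) ` constr A)" using semilinear_shift[OF pa(7)] by simp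
  qed (use fSB pa in \<open>auto simp: SB_def\<close>)
  show "alphabet (BB d A) = alphabet A" by (simp add: BB_def)
  show "final (BB d A) = {init (BB d A)}" by (simp add: BB_def)
  show "strongly_connected (BB d A)"
    unfolding strongly_connected_def
  proof (intro ballI)
    fix p q assume p: "p \<in> states (BB d A)" and q: "q \<in> states (BB d A)"
    show "(p, q) \<in> (graph_edges (BB d A))\<^sup>*"
    proof (cases "alphabet A = {}")
      case True
      then show ?thesis using p q by (simp add: BB_def SB_def)
    next
      case False
      then obtain a where a: "a \<in> alphabet A" by blast
      have "(p, a, vzero d @ [2], q) \<in> TB d A" using p q a unfolding TB_def BB_def by auto
      then have "(p, q) \<in> graph_edges (BB d A)" unfolding graph_edges_def BB_def
        by (metis (mono_tags, lifting) mem_Collect_eq pa.select_convs(4) tr_simps(1) tr_simps(4))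
      then show ?thesis by blast
    qed
  qed
  have lenB: "\<forall>v\<in>set (map vec ts). length v = Suc d" if "set ts \<subseteq> TB d A" for ts
    using that tb_len[OF assms] by auto
  show "lang d A - {[]} = lang (d + 1) (BB d A) - {[]}"
  proof
    show "lang d A - {[]} \<subseteq> lang (d + 1) (BB d A) - {[]}"
    proof
      fix w assume "w \<in> lang d A - {[]}"
      then obtain ts q where h: "w = map lbl ts" "is_run (trans A) (init A) ts q" "q \<in> final A"
        "vsum d (map vec ts) \<in> constr A" "w \<noteq> []"
        unfolding lang_def by blast
      have "ts \<noteq> []" using h by auto
      from F[OF h(2) h(3) this, of None d] obtain tsB where
        b: "is_run (TB d A) None tsB None" "map lbl tsB = map lbl ts"
        "map (butlast \<circ> vec) tsB = map vec ts" "sum_list (map mk tsB) = 1" by auto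
      have "vsum (Suc d) (map vec tsB) = vsum d (map butlast (map vec tsB)) @ [sum_list (map last (map vec tsB))]"
        using vsum_split lenB[OF run_set[OF b(1)]] by blast
      also have "\<dots> = vsum d (map vec ts) @ [1]" using b(3,4) by (simp add: mk_def[abs_def] comp_def)
      finally have "vsum (d + 1) (map vec tsB) \<in> constr (BB d A)" using h(4) by (simp add: BB_def)
      moreover have "w = map lbl tsB" using b h by simp
      ultimately have "w \<in> lang (d + 1) (BB d A)"
        unfolding lang_def
        by (intro CollectI exI[of _ tsB]) (use b in \<open>auto simp: BB_def\<close>)
      then show "w \<in> lang (d + 1) (BB d A) - {[]}" using h by simp
    qed
  next
    show "lang (d + 1) (BB d A) - {[]} \<subseteq> lang d A - {[]}"
    proof
      fix w assume "w \<in> lang (d + 1) (BB d A) - {[]}"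
      then obtain ts where h: "w = map lbl ts" "is_run (TB d A) None ts None"
        "vsum (Suc d) (map vec ts) \<in> (\<lambda>v. v @ [1]) ` constr A" "w \<noteq> []"
        unfolding lang_def by (auto simp: BB_def)
      have "vsum (Suc d) (map vec ts) = vsum d (map butlast (map vec ts)) @ [sum_list (map last (map vec ts))]"
        using vsum_split lenB[OF run_set[OF h(2)]] by blast
      with h(3) have c: "vsum d (map butlast (map vec ts)) \<in> constr A" "sum_list (map mk ts) = 1"
        by (auto simp: mk_def[abs_def] comp_def)
      from R1[OF h(2) c(2)] obtain tsA q where a: "is_run (trans A) (init A) tsA q" "q \<in> final A"
        "map lbl tsA = map lbl ts" "map vec tsA = map (butlast \<circ> vec) ts"
        by (auto simp: proj_def)
      have "vsum d (map vec tsA) \<in> constr A" using a(4) c(1) by simp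
      then have "w \<in> lang d A" unfolding lang_def
        by (intro CollectI exI[of _ tsA]) (use a h in auto)
      then show "w \<in> lang d A - {[]}" using h by simp
    qed
  qed
qed

end
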